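(* Let $E$ be a linear space of bounded, uniformly continuous complex-valued functions on $\mathbb{R}$ which is closed under uniform convergence on $\mathbb{R}$ and invariant under translations (if $f\in E$ then $f(\cdot+t)\in E$ for every $t\in\mathbb{R}$). Let $A:E\to E$ be a linear operator such that $\|Af\|_\infty\le a\|f\|_\infty$ for all $f\in E$ (with a constant $a\ge 0$), and suppose $A$ commutes with translations: $A\big(f(\cdot+t)\big)=(Af)(\cdot+t)$ for all $f\in E$, $t\in\mathbb{R}$. Then for every $p\in[1,+\infty)$, every $N>0$ and every $f\in E$, $$\|Af\|_{p,N}\le a\,\|f\|_{p,N}.$$
   Context: For $N>0$ and $p\in[1,\infty)$ define $\|f\|_{p,N}=\sup_{x\in\mathbb{R}}\Big(\int_{x-N}^{x+N}|f(t)|^p\,dt\Big)^{1/p}$. Also $\|f\|_\infty=\sup_{x\in\mathbb{R}}|f(x)|$. *)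

theory Defs
  imports "HOL-Analysis.Analysis"
begin

definition sup_norm :: "(real \<Rightarrow> complex) \<Rightarrow> real" where
  "sup_norm f = (SUP x. norm (f x))"

definition pN_norm :: "real \<Rightarrow> real \<Rightarrow> (real \<Rightarrow> complex) \<Rightarrow> real" where
  "pN_norm p N f = (SUP x. (integral {x - N..x + N} (\<lambda>t. norm (f t) powr p)) powr (1 / p))"

end

theory Submission
  imports Defs
begin


lemma riemann_piece:
  fixes \<phi> :: "real \<Rightarrow> real"
  assumes "continuous_on UNIV \<phi>" "h \<ge> 0" "\<And>t. t \<in> {c..c+h} \<Longrightarrow> \<bar>\<phi> t - \<phi> c\<bar> \<le> e"
  shows "\<bar>integral {c..c+h} \<phi> - h * \<phi> c\<bar> \<le> h * e"
proof -
  have int: "\<phi> integrable_on {c..c+h}"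
    by (rule integrable_continuous_interval) (use assms(1) continuous_on_subset in blast)
  have bnd: "\<phi> t \<le> \<phi> c + e \<and> \<phi> c - e \<le> \<phi> t" if "t \<in> {c..c+h}" for t
    using assms(3)[OF that] by linarith
  have "integral {c..c+h} \<phi> \<le> integral {c..c+h} (\<lambda>t. \<phi> c + e)"
    by (rule integral_le[OF int]) (use bnd in auto)
  moreover have "integral {c..c+h} (\<lambda>t. \<phi> c - e) \<le> integral {c..c+h} \<phi>"
    by (rule integral_le[OF _ int]) (use bnd in auto)
  ultimately show ?thesis using assms(2) by (auto simp: algebra_simps)
qed

lemma integral_split_n:
  fixes \<phi> :: "real \<Rightarrow> real"
  assumes "continuous_on UNIV \<phi>" "h \<ge> 0"
  shows "integral {c..c + real m * h} \<phi> = (\<Sum>k<m. integral {c + real k*h .. c + real k*h + h} \<phi>)"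
proof (induction m)
  case 0
  then show ?case by simp
next
  case (Suc m)
  have int: "\<phi> integrable_on {c..c + real (Suc m) * h}"
    by (rule integrable_continuous_interval) (use assms(1) continuous_on_subset in blast)
  have "integral {c..c + real m * h} \<phi> + integral {c + real m * h..c + real (Suc m) * h} \<phi>
        = integral {c..c + real (Suc m) * h} \<phi>"
    by (rule Henstock_Kurzweil_Integration.integral_combine[OF _ _ int]) (use assms(2) in \<open>auto simp: algebra_simps\<close>)
  then show ?case using Suc by (simp add: algebra_simps)
qed

lemma riemann_sum:
  fixes \<phi> :: "real \<Rightarrow> real"
  assumes "continuous_on UNIV \<phi>" "N > 0" "n > 0"
    and "\<And>s t. \<bar>s - t\<bar> \<le> 2*N/n \<Longrightarrow> \<bar>\<phi> s - \<phi> t\<bar> \<le> e"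
  shows "\<bar>integral {y-N..y+N} \<phi> - (\<Sum>k<n. (2*N/n) * \<phi> (y - N + real k*(2*N/n)))\<bar> \<le> 2*N*e"
proof -
  define h where "h = 2*N/n"
  have h0: "h \<ge> 0" using assms by (simp add: h_def)
  have eq: "y + N = (y - N) + real n * h" using assms by (simp add: h_def)
  have "integral {y-N..y+N} \<phi> = (\<Sum>k<n. integral {y-N + real k*h .. y-N + real k*h + h} \<phi>)"
    unfolding eq by (rule integral_split_n[OF assms(1) h0])
  hence "\<bar>integral {y-N..y+N} \<phi> - (\<Sum>k<n. h * \<phi> (y - N + real k*h))\<bar>
     = \<bar>\<Sum>k<n. integral {y-N + real k*h .. y-N + real k*h + h} \<phi> - h * \<phi> (y - N + real k*h)\<bar>"
    by (simp add: sum_subtractf)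
  also have "\<dots> \<le> (\<Sum>k<n. \<bar>integral {y-N + real k*h .. y-N + real k*h + h} \<phi> - h * \<phi> (y - N + real k*h)\<bar>)"
    by (rule sum_abs)
  also have "\<dots> \<le> (\<Sum>k<n. h * e)"
  proof (rule sum_mono)
    fix k assume "k \<in> {..<n}"
    show "\<bar>integral {y-N + real k*h .. y-N + real k*h + h} \<phi> - h * \<phi> (y - N + real k*h)\<bar> \<le> h * e"
      by (rule riemann_piece[OF assms(1) h0]) (use assms(4) h_def in auto)
  qed
  also have "\<dots> = 2*N*e" using assms by (simp add: h_def)
  finally show ?thesis by (simp add: h_def)
qed



lemma young01:
  fixes x y \<theta> :: real
  assumes "0 \<le> x" "0 \<le> y" "0 \<le> \<theta>" "\<theta> \<le> 1"
  shows "x powr (1-\<theta>) * y powr \<theta> \<le> (1-\<theta>)*x + \<theta>*y"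
proof (cases "x = 0 \<or> y = 0")
  case True then show ?thesis using assms by auto
next
  case False
  then show ?thesis using Youngs_inequality_0[of "1-\<theta>" \<theta> x y] assms by auto
qed

lemma young_pt:
  fixes u w a p :: real
  assumes "0 \<le> u" "0 \<le> w" "0 < a" "1 \<le> p"
  shows "u powr (p-1) * w \<le> (1-1/p) * (u powr p / a) + (1/p) * (a powr (p-1) * w powr p)"
proof -
  have th: "0 \<le> 1/p" "1/p \<le> 1" using assms by auto
  have "(u powr p / a) powr (1-1/p) * (a powr (p-1) * w powr p) powr (1/p)
       = u powr (p-1) * w"
  proof -
    have "(u powr p / a) powr (1-1/p) = u powr (p*(1-1/p)) / a powr (1-1/p)"
      using assms by (simp add: powr_divide powr_powr)
    moreover have "(a powr (p-1) * w powr p) powr (1/p) = a powr ((p-1)*(1/p)) * w"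
      using assms by (simp add: powr_mult powr_powr)
    moreover have "p*(1-1/p) = p - 1" "(p-1)*(1/p) = 1 - 1/p" using assms by (auto simp: field_simps)
    ultimately show ?thesis using assms by simp
  qed
  moreover have "(u powr p / a) powr (1-1/p) * (a powr (p-1) * w powr p) powr (1/p)
    \<le> (1-1/p) * (u powr p / a) + (1/p) * (a powr (p-1) * w powr p)"
    by (rule young01) (use assms th in auto)
  ultimately show ?thesis by simp
qed



lemma uc_pow:
  fixes F :: "real \<Rightarrow> complex"
  assumes "uniformly_continuous_on UNIV F" "bounded (range F)" "1 \<le> p"
  shows "uniformly_continuous_on UNIV (\<lambda>t. norm (F t) powr p)"
proof -
  obtain K where K: "\<And>t. norm (F t) \<le> K"
    using assms(2) by (meson bounded_iff rangeI)
  have u1: "uniformly_continuous_on UNIV (\<lambda>t. norm (F t))"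
    unfolding uniformly_continuous_on_def
  proof (intro allI impI)
    fix e :: real assume "e > 0"
    then obtain d where d: "d > 0" "\<forall>x\<in>UNIV. \<forall>x'\<in>UNIV. dist x' x < d \<longrightarrow> dist (F x') (F x) < e"
      using assms(1) unfolding uniformly_continuous_on_def by blast
    show "\<exists>d>0. \<forall>x\<in>UNIV. \<forall>x'\<in>UNIV. dist x' x < d \<longrightarrow> dist (norm (F x')) (norm (F x)) < e"
    proof (intro exI[of _ d] conjI ballI impI)
      fix x x' :: real assume "dist x' x < d"
      hence "dist (F x') (F x) < e" using d by blast
      moreover have "dist (norm (F x')) (norm (F x)) \<le> dist (F x') (F x)"
        by (simp add: dist_norm dist_real_def norm_triangle_ineq3)
      ultimately show "dist (norm (F x')) (norm (F x)) < e" by linarith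
    qed (use d in auto)
  qed
  have sub: "(\<lambda>t. norm (F t)) ` UNIV \<subseteq> {0..K}" using K by auto
  have "continuous_on {0..K} (\<lambda>x::real. x powr p)"
    by (rule continuous_on_powr') (use assms(3) in \<open>auto intro: continuous_intros\<close>)
  hence "uniformly_continuous_on {0..K} (\<lambda>x::real. x powr p)"
    by (rule compact_uniformly_continuous) simp
  hence "uniformly_continuous_on ((\<lambda>t. norm (F t)) ` UNIV) (\<lambda>x::real. x powr p)"
    using sub unfolding uniformly_continuous_on_def by (meson subsetD)
  thus ?thesis using uniformly_continuous_on_compose[OF u1] by blast
qed

lemma uc_delta:
  fixes \<phi> :: "real \<Rightarrow> real"
  assumes "uniformly_continuous_on UNIV \<phi>" "e > 0"
  obtains d where "d > 0" "\<And>s t. \<bar>s - t\<bar> \<le> d \<Longrightarrow> \<bar>\<phi> s - \<phi> t\<bar> \<le> e"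
proof -
  obtain d where d: "d > 0" "\<And>x x'. dist x' x < d \<Longrightarrow> dist (\<phi> x') (\<phi> x) < e"
    using assms unfolding uniformly_continuous_on_def by blast
  show ?thesis
  proof (rule that[of "d/2"])
    show "d/2 > 0" using d by simp
    fix s t :: real assume "\<bar>s - t\<bar> \<le> d/2"
    hence "dist s t < d" using d by (simp add: dist_real_def)
    thus "\<bar>\<phi> s - \<phi> t\<bar> \<le> e" using d(2)[of t s] by (simp add: dist_real_def abs_minus_commute)
  qed
qed


theorem theorem1p2p7:
  fixes E :: "(real \<Rightarrow> complex) set"
    and A :: "(real \<Rightarrow> complex) \<Rightarrow> (real \<Rightarrow> complex)"
    and a :: real
  assumes E_bounded: "\<And>f. f \<in> E \<Longrightarrow> bounded (range f)"
    and E_unif_cont: "\<And>f. f \<in> E \<Longrightarrow> uniformly_continuous_on UNIV f"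
    and E_zero: "(\<lambda>x. 0) \<in> E"
    and E_add: "\<And>f g. f \<in> E \<Longrightarrow> g \<in> E \<Longrightarrow> (\<lambda>x. f x + g x) \<in> E"
    and E_scale: "\<And>c f. f \<in> E \<Longrightarrow> (\<lambda>x. c * f x) \<in> E"
    and E_closed: "\<And>fs g. (\<And>n. fs n \<in> E) \<Longrightarrow> uniform_limit UNIV fs g sequentially \<Longrightarrow> g \<in> E"
    and E_transl: "\<And>f t. f \<in> E \<Longrightarrow> (\<lambda>x. f (x + t)) \<in> E"
    and A_maps: "\<And>f. f \<in> E \<Longrightarrow> A f \<in> E"
    and A_add: "\<And>f g. f \<in> E \<Longrightarrow> g \<in> E \<Longrightarrow> A (\<lambda>x. f x + g x) = (\<lambda>x. A f x + A g x)"
    and A_scale: "\<And>c f. f \<in> E \<Longrightarrow> A (\<lambda>x. c * f x) = (\<lambda>x. c * A f x)"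
    and a_nonneg: "a \<ge> 0"
    and A_bound: "\<And>f. f \<in> E \<Longrightarrow> sup_norm (A f) \<le> a * sup_norm f"
    and A_transl: "\<And>f t. f \<in> E \<Longrightarrow> A (\<lambda>x. f (x + t)) = (\<lambda>x. A f (x + t))"
    and p: "1 \<le> p"
    and N: "0 < N"
    and f: "f \<in> E"
  shows "pN_norm p N (A f) \<le> a * pN_norm p N f"
  proof -
  have sn_upper: "norm (F x) \<le> sup_norm F" if "bounded (range F)" for F :: "real \<Rightarrow> complex" and x
  proof -
    have "bdd_above (range (\<lambda>x. norm (F x)))"
      using that by (metis bdd_above_norm image_image)
    thus ?thesis unfolding sup_norm_def using cSUP_upper[of x UNIV "\<lambda>x. norm (F x)"] by simp
  qed
  have sn_least: "sup_norm F \<le> K" if "\<And>x. norm (F x) \<le> K" for F :: "real \<Rightarrow> complex" and K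
    unfolding sup_norm_def by (rule cSUP_least) (use that in auto)
  have lin: "(\<lambda>z. \<Sum>k\<in>K. c k * f (z + s k)) \<in> E \<and>
       A (\<lambda>z. \<Sum>k\<in>K. c k * f (z + s k)) = (\<lambda>z. \<Sum>k\<in>K. c k * A f (z + s k))"
    if "finite K" for K :: "nat set" and c s
    using that
  proof (induction K rule: finite_induct)
    case empty
    have "A (\<lambda>x. 0 * f x) = (\<lambda>x. 0 * A f x)" by (rule A_scale[OF f])
    then show ?case using E_zero by simp
  next
    case (insert k K)
    define g where "g = (\<lambda>z. \<Sum>k\<in>K. c k * f (z + s k))"
    define t where "t = (\<lambda>z. f (z + s k))"
    have tE: "t \<in> E" unfolding t_def by (rule E_transl[OF f])
    have ctE: "(\<lambda>z. c k * t z) \<in> E" by (rule E_scale[OF tE])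
    have gE: "g \<in> E" and Ag: "A g = (\<lambda>z. \<Sum>k\<in>K. c k * A f (z + s k))"
      using insert.IH unfolding g_def by auto
    have At: "A t = (\<lambda>z. A f (z + s k))" unfolding t_def by (rule A_transl[OF f])
    have eq: "(\<lambda>z. \<Sum>k\<in>insert k K. c k * f (z + s k)) = (\<lambda>z. (\<lambda>z. c k * t z) z + g z)"
      using insert.hyps by (simp add: g_def t_def)
    show ?case unfolding eq
      using E_add[OF ctE gE] A_add[OF ctE gE] A_scale[OF tE, of "c k"] At Ag insert.hyps
      by simp
  qed
  have Af: "A f \<in> E" by (rule A_maps[OF f])
  have core: "(\<Sum>k<n. (2*N/real n) * norm (A f (x - N + real k*(2*N/real n))) powr p) \<le> a powr p * M"
    if hM: "\<And>y. (\<Sum>k<n. (2*N/real n) * norm (f (y - N + real k*(2*N/real n))) powr p) \<le> M"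
      and M0: "0 \<le> M" for n M x
  proof -
    define h where "h = 2*N/real n"
    have h0: "0 \<le> h" using N by (simp add: h_def)
    define u where "u k = A f (x - N + real k*h)" for k
    define S where "S = (\<Sum>k<n. h * norm (u k) powr p)"
    define c where "c k = complex_of_real (h * norm (u k) powr (p-1) / norm (u k)) * cnj (u k)" for k
    define sh where "sh k = real k * h - N" for k
    define g where "g = (\<lambda>z. \<Sum>k\<in>{..<n}. c k * f (z + sh k))"
    have gE: "g \<in> E" and Ag: "A g = (\<lambda>z. \<Sum>k\<in>{..<n}. c k * A f (z + sh k))"
      using lin[of "{..<n}" c sh] unfolding g_def by auto
    have cu: "c k * u k = complex_of_real (h * norm (u k) powr p)" for k
    proof (cases "u k = 0")
      case True then show ?thesis by (simp add: c_def)
    next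
      case False
      have e1: "c k * u k = complex_of_real (h * norm (u k) powr (p-1) / norm (u k)) * (u k * cnj (u k))"
        by (simp add: c_def mult_ac)
      have e2: "u k * cnj (u k) = complex_of_real ((norm (u k))\<^sup>2)"
        by (rule complex_norm_square[symmetric])
      have e4: "norm (u k) powr (p-1) * norm (u k) = norm (u k) powr p"
      proof -
        have "norm (u k) powr (p-1) * norm (u k) powr 1 = norm (u k) powr ((p-1)+1)"
          by (rule powr_add[symmetric])
        thus ?thesis using False by simp
      qed
      have e3: "h * norm (u k) powr (p-1) / norm (u k) * (norm (u k))\<^sup>2 = h * norm (u k) powr p"
        using False e4 by (simp add: power2_eq_square field_simps)
      show ?thesis by (simp only: e1 e2 of_real_mult[symmetric] e3)
    qed
    have nc: "norm (c k) = h * norm (u k) powr (p-1)" for k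
    proof (cases "u k = 0")
      case True then show ?thesis by (simp add: c_def)
    next
      case False
      have "norm (c k) = \<bar>h * norm (u k) powr (p-1) / norm (u k)\<bar> * norm (u k)"
        unfolding c_def norm_mult complex_mod_cnj norm_of_real ..
      also have "\<dots> = h * norm (u k) powr (p-1)" using False h0 by simp
      finally show ?thesis .
    qed
    have Agx: "A g x = complex_of_real S"
    proof -
      have "A g x = (\<Sum>k<n. c k * u k)"
        unfolding Ag u_def sh_def by (simp add: algebra_simps)
      also have "\<dots> = complex_of_real S" unfolding S_def cu by simp
      finally show ?thesis .
    qed
    have S0: "0 \<le> S" unfolding S_def using h0 by (auto intro!: sum_nonneg)
    have "S = norm (A g x)" using Agx S0 by simp
    also have "\<dots> \<le> sup_norm (A g)" by (rule sn_upper[OF E_bounded[OF A_maps[OF gE]]])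
    also have "\<dots> \<le> a * sup_norm g" by (rule A_bound[OF gE])
    finally have Sle: "S \<le> a * sup_norm g" .
    show ?thesis
    proof (cases "a = 0")
      case True
      then show ?thesis using Sle S0 unfolding S_def h_def u_def by simp
    next
      case False
      hence a0: "0 < a" using a_nonneg by simp
      have gb: "sup_norm g \<le> (1-1/p) / a * S + (1/p) * a powr (p-1) * M"
      proof (rule sn_least)
        fix y
        have "norm (g y) \<le> (\<Sum>k<n. norm (c k * f (y + sh k)))"
          unfolding g_def by (rule norm_sum)
        also have "\<dots> = (\<Sum>k<n. h * (norm (u k) powr (p-1) * norm (f (y + sh k))))"
          by (simp add: norm_mult nc mult.assoc)
        also have "\<dots> \<le> (\<Sum>k<n. h * ((1-1/p) * (norm (u k) powr p / a) + (1/p) * (a powr (p-1) * norm (f (y + sh k)) powr p)))"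
          by (intro sum_mono mult_left_mono young_pt) (use a0 p h0 in auto)
        also have "\<dots> = (1-1/p) / a * S + (1/p) * a powr (p-1) * (\<Sum>k<n. h * norm (f (y + sh k)) powr p)"
          unfolding S_def by (simp add: sum.distrib sum_distrib_left algebra_simps)
        also have "(\<Sum>k<n. h * norm (f (y + sh k)) powr p) \<le> M"
          using hM[of y] by (simp add: sh_def h_def algebra_simps)
        hence "(1-1/p) / a * S + (1/p) * a powr (p-1) * (\<Sum>k<n. h * norm (f (y + sh k)) powr p)
              \<le> (1-1/p) / a * S + (1/p) * a powr (p-1) * M"
          using p by (intro add_left_mono mult_left_mono) auto
        finally show "norm (g y) \<le> (1-1/p) / a * S + (1/p) * a powr (p-1) * M" .
      qed
      have "S \<le> a * ((1-1/p) / a * S + (1/p) * a powr (p-1) * M)"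
        using Sle gb a0 by (meson mult_left_mono order_trans less_imp_le)
      also have "\<dots> = (1-1/p) * S + (1/p) * (a * a powr (p-1)) * M"
        using a0 by (simp add: field_simps)
      also have "a * a powr (p-1) = a powr p"
      proof -
        have "a powr 1 * a powr (p-1) = a powr (1 + (p-1))" by (rule powr_add[symmetric])
        thus ?thesis using a0 by simp
      qed
      finally have "(1/p) * S \<le> (1/p) * (a powr p * M)" by (simp add: algebra_simps)
      hence "S \<le> a powr p * M" using p by (auto simp: divide_le_cancel)
      thus ?thesis unfolding S_def u_def h_def .
    qed
  qed
  define P where "P = pN_norm p N f"
  define J where "J F y = integral {y - N..y + N} (\<lambda>t. norm (F t) powr p)" for F :: "real \<Rightarrow> complex" and y
  have ucf: "uniformly_continuous_on UNIV (\<lambda>t. norm (f t) powr p)"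
    by (rule uc_pow[OF E_unif_cont[OF f] E_bounded[OF f] p])
  have ucA: "uniformly_continuous_on UNIV (\<lambda>t. norm (A f t) powr p)"
    by (rule uc_pow[OF E_unif_cont[OF Af] E_bounded[OF Af] p])
  have cf: "continuous_on UNIV (\<lambda>t. norm (f t) powr p)"
    using ucf by (rule uniformly_continuous_imp_continuous)
  have cA: "continuous_on UNIV (\<lambda>t. norm (A f t) powr p)"
    using ucA by (rule uniformly_continuous_imp_continuous)
  have J0: "0 \<le> J f y" for y
    unfolding J_def
    by (rule integral_nonneg) (use cf in \<open>auto intro: integrable_continuous_interval continuous_on_subset\<close>)
  obtain K where K: "\<And>t. norm (f t) \<le> K"
    using E_bounded[OF f] by (meson bounded_iff rangeI)
  have bdd: "bdd_above (range (\<lambda>y. J f y powr (1/p)))"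
  proof (rule bdd_aboveI2)
    fix y
    have "J f y \<le> integral {y - N..y + N} (\<lambda>t. K powr p)"
      unfolding J_def
    proof (rule integral_le)
      show "(\<lambda>t. norm (f t) powr p) integrable_on {y - N..y + N}"
        using cf by (auto intro: integrable_continuous_interval continuous_on_subset)
      fix t show "norm (f t) powr p \<le> K powr p" using K[of t] p by (simp add: powr_mono2)
    qed (rule integrable_const_ivl)
    also have "\<dots> = 2 * N * K powr p" using N by simp
    finally show "J f y powr (1/p) \<le> (2 * N * K powr p) powr (1/p)"
      using J0[of y] p by (simp add: powr_mono2)
  qed
  have JP: "J f y powr (1/p) \<le> P" for y
    unfolding P_def pN_norm_def J_def[symmetric] using cSUP_upper[OF _ bdd, of y] by simp
  have P0: "0 \<le> P" using JP[of 0] by (meson order_trans powr_ge_zero)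
  have JB: "J f y \<le> P powr p" for y
  proof -
    have "J f y = (J f y powr (1/p)) powr p" using J0[of y] p by (simp add: powr_powr)
    also have "\<dots> \<le> P powr p" using JP[of y] p by (simp add: powr_mono2)
    finally show ?thesis .
  qed
  have main: "J (A f) x \<le> a powr p * P powr p" for x
  proof (rule field_le_epsilon)
    fix e :: real assume e: "0 < e"
    define C where "C = 2 * N * (a powr p + 1)"
    have C0: "0 < C" using N by (simp add: C_def add_nonneg_pos)
    define e' where "e' = e / C"
    have e'0: "0 < e'" using e C0 by (simp add: e'_def)
    obtain d1 where d1: "d1 > 0" "\<And>s t. \<bar>s - t\<bar> \<le> d1 \<Longrightarrow> \<bar>norm (f s) powr p - norm (f t) powr p\<bar> \<le> e'"
      using uc_delta[OF ucf e'0] by blast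
    obtain d2 where d2: "d2 > 0" "\<And>s t. \<bar>s - t\<bar> \<le> d2 \<Longrightarrow> \<bar>norm (A f s) powr p - norm (A f t) powr p\<bar> \<le> e'"
      using uc_delta[OF ucA e'0] by blast
    define d where "d = min d1 d2"
    have d0: "0 < d" using d1 d2 by (simp add: d_def)
    obtain n :: nat where n: "2 * N / d < real n" using reals_Archimedean2 by blast
    have npos: "0 < n" using n N d0
      by (metis divide_pos_pos gr0I less_asym mult_pos_pos of_nat_0 zero_less_numeral)
    have hd: "2 * N / real n \<le> d"
      using n npos d0 by (simp add: field_simps)
    have Rf: "\<bar>J f y - (\<Sum>k<n. (2*N/real n) * norm (f (y - N + real k*(2*N/real n))) powr p)\<bar> \<le> 2*N*e'" for y
      unfolding J_def
      using riemann_sum[OF cf N npos, of e' y] d1(2) hd by (simp add: d_def)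
    have RA: "\<bar>J (A f) x - (\<Sum>k<n. (2*N/real n) * norm (A f (x - N + real k*(2*N/real n))) powr p)\<bar> \<le> 2*N*e'"
      unfolding J_def
      using riemann_sum[OF cA N npos, of e' x] d2(2) hd by (simp add: d_def)
    have M: "(\<Sum>k<n. (2*N/real n) * norm (f (y - N + real k*(2*N/real n))) powr p) \<le> P powr p + 2*N*e'" for y
      using Rf[of y] JB[of y] by linarith
    have M0: "0 \<le> P powr p + 2*N*e'" using N e'0 by simp
    have "(\<Sum>k<n. (2*N/real n) * norm (A f (x - N + real k*(2*N/real n))) powr p) \<le> a powr p * (P powr p + 2*N*e')"
      by (rule core[OF M M0])
    hence "J (A f) x \<le> a powr p * P powr p + 2*N*e'*(a powr p + 1)"
      using RA by (simp add: algebra_simps)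
    also have "2*N*e'*(a powr p + 1) = e" proof -
      have "0 < a powr p + 1" using powr_ge_zero[of a p] by linarith
      thus ?thesis using N by (simp add: e'_def C_def)
    qed
    finally show "J (A f) x \<le> a powr p * P powr p + e" .
  qed
  show ?thesis
    unfolding P_def[symmetric]
    unfolding pN_norm_def[of p N "A f"] J_def[symmetric]
  proof (rule cSUP_least)
    fix x
    have "J (A f) x powr (1/p) \<le> (a powr p * P powr p) powr (1/p)"
      using main[of x] p by (intro powr_mono2) (auto simp: J_def intro!: integral_nonneg integrable_continuous_interval continuous_on_subset[OF cA])
    also have "\<dots> = a * P"
      using p P0 a_nonneg by (simp add: powr_mult[symmetric] powr_powr)
    finally show "J (A f) x powr (1/p) \<le> a * P" .
  qed simp
qed

end
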